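(* Let $F$ be a field of characteristic zero and let $n\ge 2$. Let $C_n$ be the oriented cycle quiver with $n$ vertices and $FC_n$ its path algebra over $F$. Then $\mathrm{Id}(FC_n)=\mathrm{Id}(M_n(F))$.
   Context: The oriented cycle $C_n$ has vertices $1,\dots,n$ and arrows $i\to i+1$ for $1\le i<n$ and $n\to 1$. The path algebra $FC_n$ is the $F$-vector space with basis all paths of $C_n$ (including length-zero paths at each vertex), with product of paths $p,q$ equal to the concatenation $pq$ if the terminal vertex of $p$ equals the starting vertex of $q$, and $0$ otherwise. $M_n(F)$ is the algebra of $n\times n$ matrices over $F$. For an $F$-algebra $A$, $\mathrm{Id}(A)$ denotes the T-ideal of the free associative algebra $F\langle X\rangle$ consisting of all polynomial identities satisfied by $A$. *)

theory Defs
  imports Main "Jordan_Normal_Form.Matrix"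
begin

text \<open>Elements of the free associative (unital) algebra over 'a on the countably
many variables x_0, x_1, ...: finitely supported coefficient functions on words
(a word is a list of variable indices; the empty word is the unit).\<close>

type_synonym 'a ncpoly = "nat list \<Rightarrow> 'a"

definition ncpolys :: "('a::zero) ncpoly set" where
  "ncpolys = {f. finite {w. f w \<noteq> 0}}"

definition mat_word :: "nat \<Rightarrow> (nat \<Rightarrow> 'a::field mat) \<Rightarrow> nat list \<Rightarrow> 'a mat" where
  "mat_word n s w = foldr (\<lambda>i acc. s i * acc) w (1\<^sub>m n)"

definition mat_eval :: "nat \<Rightarrow> 'a::field ncpoly \<Rightarrow> (nat \<Rightarrow> 'a mat) \<Rightarrow> 'a mat" where
  "mat_eval n f s = mat n n (\<lambda>(i,j). \<Sum>w\<in>{w. f w \<noteq> 0}. f w * mat_word n s w $$ (i,j))"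

definition Id_mat :: "nat \<Rightarrow> 'a::field ncpoly set" where
  "Id_mat n = {f \<in> ncpolys. \<forall>s. (\<forall>i. s i \<in> carrier_mat n n) \<longrightarrow> mat_eval n f s = 0\<^sub>m n n}"

text \<open>Vertices of C_n are 0,...,n-1 (shifted from 1,...,n); the arrows are i -> (i+1) mod n.
A path of C_n is uniquely determined by its starting vertex i and its length k;
it ends at (i+k) mod n.  An element of F C_n is a finitely supported coefficient
function on the pairs (i,k) with i < n.  The product of the paths (i,k) and (j,l)
is (i,k+l) if (i+k) mod n = j, and 0 otherwise.\<close>

definition pa_carrier :: "nat \<Rightarrow> (nat \<times> nat \<Rightarrow> 'a::zero) set" where
  "pa_carrier n = {a. finite {p. a p \<noteq> 0} \<and> (\<forall>i k. a (i,k) \<noteq> 0 \<longrightarrow> i < n)}"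

definition pa_mult :: "nat \<Rightarrow> (nat \<times> nat \<Rightarrow> 'a::field) \<Rightarrow> (nat \<times> nat \<Rightarrow> 'a) \<Rightarrow> (nat \<times> nat \<Rightarrow> 'a)" where
  "pa_mult n a b = (\<lambda>(i,m). \<Sum>k\<le>m. a (i,k) * b ((i+k) mod n, m-k))"

definition pa_one :: "nat \<Rightarrow> (nat \<times> nat \<Rightarrow> 'a::field)" where
  "pa_one n = (\<lambda>(i,k). if i < n \<and> k = 0 then 1 else 0)"

definition pa_word :: "nat \<Rightarrow> (nat \<Rightarrow> (nat \<times> nat \<Rightarrow> 'a::field)) \<Rightarrow> nat list \<Rightarrow> (nat \<times> nat \<Rightarrow> 'a)" where
  "pa_word n s w = foldr (\<lambda>i acc. pa_mult n (s i) acc) w (pa_one n)"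

definition pa_eval :: "nat \<Rightarrow> 'a::field ncpoly \<Rightarrow> (nat \<Rightarrow> (nat \<times> nat \<Rightarrow> 'a)) \<Rightarrow> (nat \<times> nat \<Rightarrow> 'a)" where
  "pa_eval n f s = (\<lambda>p. \<Sum>w\<in>{w. f w \<noteq> 0}. f w * pa_word n s w p)"

definition Id_pa :: "nat \<Rightarrow> 'a::field ncpoly set" where
  "Id_pa n = {f \<in> ncpolys. \<forall>s. (\<forall>i. s i \<in> pa_carrier n) \<longrightarrow> pa_eval n f s = (\<lambda>_. 0)}"

end

theory Submission
  imports Defs "HOL-Computational_Algebra.Polynomial"
begin

definition bnd :: "(nat \<times> nat \<Rightarrow> 'a::zero) \<Rightarrow> nat \<Rightarrow> bool" where
  "bnd a N \<longleftrightarrow> (\<forall>i k. N \<le> k \<longrightarrow> a (i,k) = 0)"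

definition rws :: "nat \<Rightarrow> (nat \<times> nat \<Rightarrow> 'a::zero) \<Rightarrow> bool" where
  "rws n a \<longleftrightarrow> (\<forall>i k. n \<le> i \<longrightarrow> a (i,k) = 0)"

definition phe :: "nat \<Rightarrow> 'a::field \<Rightarrow> (nat \<times> nat \<Rightarrow> 'a) \<Rightarrow> nat \<Rightarrow> nat \<Rightarrow> nat \<Rightarrow> 'a" where
  "phe n x a N i j = (\<Sum>k<N. if (i+k) mod n = j then a (i,k) * x^k else 0)"

definition phi :: "nat \<Rightarrow> 'a::field \<Rightarrow> (nat \<times> nat \<Rightarrow> 'a) \<Rightarrow> 'a mat" where
  "phi n x a = mat n n (\<lambda>(i,j). \<Sum>k\<in>{k. a (i,k) \<noteq> 0}. if (i+k) mod n = j then a (i,k) * x^k else 0)"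

lemma bnd_mono: "bnd a N \<Longrightarrow> N \<le> M \<Longrightarrow> bnd a M"
  unfolding bnd_def by auto

lemma phi_entry:
  assumes "bnd a N" "i < n" "j < n"
  shows "phi n x a $$ (i,j) = phe n x a N i j"
proof -
  have "{k. a (i,k) \<noteq> 0} \<subseteq> {..<N}" using assms(1) unfolding bnd_def
    by (auto simp: not_less[symmetric])
  then show ?thesis using assms(2,3) unfolding phi_def phe_def
    by (auto intro!: sum.mono_neutral_left split: if_splits)
qed

lemma phi_carrier: "phi n x a \<in> carrier_mat n n"
  unfolding phi_def by simp

lemma bnd_mult:
  assumes "bnd a N" "bnd b M"
  shows "bnd (pa_mult n a b) (N+M)"
  unfolding bnd_def pa_mult_def
proof (intro allI impI)
  fix i m assume m: "N + M \<le> m"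
  have "a (i,k) * b ((i+k) mod n, m-k) = 0" if "k \<le> m" for k
  proof (cases "N \<le> k")
    case True then show ?thesis using assms(1) unfolding bnd_def by simp
  next
    case False then have "M \<le> m - k" using m by simp
    then show ?thesis using assms(2) unfolding bnd_def by simp
  qed
  then show "(case (i, m) of (i, m) \<Rightarrow> \<Sum>k\<le>m. a (i, k) * b ((i + k) mod n, m - k)) = 0"
    by (auto intro!: sum.neutral)
qed

lemma rws_mult: "rws n a \<Longrightarrow> rws n (pa_mult n a b)"
  unfolding rws_def pa_mult_def by auto

lemma bnd_one: "bnd (pa_one n) 1"
  unfolding bnd_def pa_one_def by auto

lemma rws_one: "rws n (pa_one n)"
  unfolding rws_def pa_one_def by auto

lemma phi_one:
  assumes "0 < n"
  shows "phi n x (pa_one n) = 1\<^sub>m n"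
proof (rule eq_matI)
  fix i j assume ij: "i < dim_row (1\<^sub>m n :: 'a mat)" "j < dim_col (1\<^sub>m n :: 'a mat)"
  then show "phi n x (pa_one n) $$ (i, j) = 1\<^sub>m n $$ (i, j)"
    using phi_entry[OF bnd_one, of i n j x]
    by (simp add: phe_def pa_one_def)
qed (auto simp: phi_def)

lemma phi_mult:
  assumes n: "0 < n" and a: "bnd a N" and b: "bnd b M"
  shows "phi n x (pa_mult n a b) = phi n x a * phi n x b"
proof (rule eq_matI)
  fix i j assume ij: "i < dim_row (phi n x a * phi n x b)" "j < dim_col (phi n x a * phi n x b)"
  then have i: "i < n" and j: "j < n" by (auto simp: phi_def)
  define g where "g k r = (if (i+k+r) mod n = j then a (i,k) * b ((i+k) mod n, r) * x^(k+r) else 0)" for k r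
  have "(phi n x a * phi n x b) $$ (i,j) = (\<Sum>l\<in>{0..<n}. phi n x a $$ (i,l) * phi n x b $$ (l,j))"
    using i j by (simp add: phi_def scalar_prod_def)
  also have "\<dots> = (\<Sum>l\<in>{0..<n}. phe n x a N i l * phe n x b M l j)"
    using i j by (intro sum.cong refl) (simp add: phi_entry[OF a] phi_entry[OF b])
  also have "\<dots> = (\<Sum>l\<in>{0..<n}. \<Sum>k<N. if (i+k) mod n = l then a (i,k) * x^k * phe n x b M l j else 0)"
    unfolding phe_def[of n x a] sum_distrib_right by (intro sum.cong refl) auto
  also have "\<dots> = (\<Sum>k<N. \<Sum>l\<in>{0..<n}. if (i+k) mod n = l then a (i,k) * x^k * phe n x b M l j else 0)"
    by (rule sum.swap)
  also have "\<dots> = (\<Sum>k<N. a (i,k) * x^k * phe n x b M ((i+k) mod n) j)"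
    using n by (intro sum.cong refl) (simp add: sum.delta)
  also have "\<dots> = (\<Sum>k<N. \<Sum>r<M. g k r)"
    unfolding phe_def sum_distrib_left g_def
  proof (intro sum.cong refl)
    fix k r
    have e: "((i+k) mod n + r) mod n = (i+k+r) mod n" by (simp add: mod_add_left_eq)
    show "a (i, k) * x ^ k * (if ((i + k) mod n + r) mod n = j then b ((i + k) mod n, r) * x ^ r else 0) =
      (if (i + k + r) mod n = j then a (i, k) * b ((i + k) mod n, r) * x ^ (k + r) else 0)"
      unfolding e by (simp add: power_add ac_simps)
  qed
  also have "\<dots> = (\<Sum>(k,r)\<in>{..<N} \<times> {..<M}. g k r)"
    by (simp add: sum.cartesian_product)
  also have "\<dots> = (\<Sum>(k,r)\<in>{(k,r). k + r < N + M}. g k r)"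
  proof (rule sum.mono_neutral_left)
    show "finite {(k, r). k + r < N + M}"
      by (rule finite_subset[of _ "{..<N+M} \<times> {..<N+M}"]) auto
    show "{..<N} \<times> {..<M} \<subseteq> {(k, r). k + r < N + M}" by auto
    show "\<forall>p\<in>{(k, r). k + r < N + M} - {..<N} \<times> {..<M}. (case p of (k, r) \<Rightarrow> g k r) = 0"
    proof
      fix p assume "p \<in> {(k, r). k + r < N + M} - {..<N} \<times> {..<M}"
      then obtain k r where p: "p = (k,r)" and "\<not> (k < N \<and> r < M)" by auto
      then have "N \<le> k \<or> M \<le> r" by auto
      then have "a (i,k) = 0 \<or> b ((i+k) mod n, r) = 0" using a b unfolding bnd_def by blast
      then show "(case p of (k, r) \<Rightarrow> g k r) = 0" unfolding p g_def by auto
    qed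
  qed
  also have "\<dots> = (\<Sum>m<N+M. \<Sum>k\<le>m. g k (m - k))"
    by (rule sum.triangle_reindex)
  also have "\<dots> = phe n x (pa_mult n a b) (N+M) i j"
    unfolding phe_def pa_mult_def g_def
    by (intro sum.cong refl) (auto simp: sum_distrib_right intro!: sum.cong)
  also have "\<dots> = phi n x (pa_mult n a b) $$ (i,j)"
    using phi_entry[OF bnd_mult[OF a b], of i n j x] i j by simp
  finally show "phi n x (pa_mult n a b) $$ (i, j) = (phi n x a * phi n x b) $$ (i, j)" by simp
qed (auto simp: phi_def)

lemma pa_word_props:
  assumes n: "0 < n" and B: "\<And>i. bnd (s i) (Bs i)" and R: "\<And>i. rws n (s i)"
  shows "bnd (pa_word n s w) (1 + sum_list (map Bs w)) \<and> rws n (pa_word n s w) \<and>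
         phi n x (pa_word n s w) = mat_word n (\<lambda>i. phi n x (s i)) w"
proof (induction w)
  case Nil
  show ?case
    by (simp add: pa_word_def mat_word_def bnd_one rws_one phi_one[OF n] del: One_nat_def)
next
  case (Cons i w)
  have e1: "pa_word n s (i # w) = pa_mult n (s i) (pa_word n s w)"
    by (simp add: pa_word_def)
  have e2: "mat_word n (\<lambda>i. phi n x (s i)) (i # w) = phi n x (s i) * mat_word n (\<lambda>i. phi n x (s i)) w"
    by (simp add: mat_word_def)
  have b: "bnd (pa_word n s (i # w)) (Bs i + (1 + sum_list (map Bs w)))"
    unfolding e1 using bnd_mult[OF B] Cons by blast
  have ih: "bnd (pa_word n s w) (1 + sum_list (map Bs w))" "rws n (pa_word n s w)"
     "phi n x (pa_word n s w) = mat_word n (\<lambda>i. phi n x (s i)) w" using Cons by auto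
  have p: "phi n x (pa_word n s (i # w)) = phi n x (s i) * phi n x (pa_word n s w)"
    unfolding e1 by (rule phi_mult[OF n B ih(1)])
  have "bnd (pa_word n s (i # w)) (1 + sum_list (map Bs (i # w)))"
    using b by (simp add: ac_simps)
  moreover have "rws n (pa_word n s (i # w))" unfolding e1 by (rule rws_mult[OF R])
  ultimately show ?case unfolding e2 p ih(3) by simp
qed

lemma pa_eval_props:
  assumes n: "0 < n" and B: "\<And>i. bnd (s i) (Bs i)" and R: "\<And>i. rws n (s i)"
    and f: "f \<in> ncpolys"
  defines "N \<equiv> (\<Sum>w\<in>{w. f w \<noteq> 0}. 1 + sum_list (map Bs w))"
  shows "bnd (pa_eval n f s) N \<and> rws n (pa_eval n f s) \<and>
         phi n x (pa_eval n f s) = mat_eval n f (\<lambda>i. phi n x (s i))"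
proof -
  let ?W = "{w. f w \<noteq> 0}"
  have fin: "finite ?W" using f by (simp add: ncpolys_def)
  have bw: "bnd (pa_word n s w) N" if "w \<in> ?W" for w
  proof -
    have "1 + sum_list (map Bs w) \<le> N"
      unfolding N_def by (rule member_le_sum) (use fin that in auto)
    then show ?thesis using pa_word_props[where s=s and Bs=Bs, OF n B R] bnd_mono by blast
  qed
  have b: "bnd (pa_eval n f s) N"
    unfolding bnd_def pa_eval_def
  proof (intro allI impI)
    fix i k assume "N \<le> k"
    then show "(\<Sum>w\<in>?W. f w * pa_word n s w (i, k)) = 0"
      using bw unfolding bnd_def by (auto intro!: sum.neutral)
  qed
  have r: "rws n (pa_eval n f s)"
    using pa_word_props[where s=s and Bs=Bs, OF n B R] unfolding rws_def pa_eval_def by (auto intro!: sum.neutral)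
  have p: "phi n x (pa_eval n f s) = mat_eval n f (\<lambda>i. phi n x (s i))"
  proof (rule eq_matI)
    fix i j assume ij: "i < dim_row (mat_eval n f (\<lambda>i. phi n x (s i)))" "j < dim_col (mat_eval n f (\<lambda>i. phi n x (s i)))"
    then have i: "i < n" and j: "j < n" by (auto simp: mat_eval_def)
    have "phi n x (pa_eval n f s) $$ (i,j) = phe n x (pa_eval n f s) N i j"
      using phi_entry[OF b i j] .
    also have "\<dots> = (\<Sum>w\<in>?W. f w * phe n x (pa_word n s w) N i j)"
    proof -
      have "(\<Sum>w\<in>?W. f w * phe n x (pa_word n s w) N i j) =
        (\<Sum>w\<in>?W. \<Sum>k<N. f w * (if (i+k) mod n = j then pa_word n s w (i,k) * x^k else 0))"
        unfolding phe_def sum_distrib_left ..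
      also have "\<dots> = (\<Sum>k<N. \<Sum>w\<in>?W. f w * (if (i+k) mod n = j then pa_word n s w (i,k) * x^k else 0))"
        by (rule sum.swap)
      also have "\<dots> = phe n x (pa_eval n f s) N i j"
        unfolding phe_def pa_eval_def
      proof (rule sum.cong[OF refl])
        fix k
        show "(\<Sum>w\<in>?W. f w * (if (i+k) mod n = j then pa_word n s w (i,k) * x^k else 0)) =
          (if (i+k) mod n = j then (\<Sum>w\<in>?W. f w * pa_word n s w (i,k)) * x^k else 0)"
          by (cases "(i+k) mod n = j") (simp_all add: sum_distrib_right mult.assoc)
      qed
      finally show ?thesis by simp
    qed
    also have "\<dots> = (\<Sum>w\<in>?W. f w * phi n x (pa_word n s w) $$ (i,j))"
      using phi_entry[OF bw i j] by (intro sum.cong refl) simp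
    also have "\<dots> = (\<Sum>w\<in>?W. f w * mat_word n (\<lambda>i. phi n x (s i)) w $$ (i,j))"
      using pa_word_props[where s=s and Bs=Bs, OF n B R] by simp
    also have "\<dots> = mat_eval n f (\<lambda>i. phi n x (s i)) $$ (i,j)"
      using i j by (simp add: mat_eval_def)
    finally show "phi n x (pa_eval n f s) $$ (i,j) = mat_eval n f (\<lambda>i. phi n x (s i)) $$ (i,j)" .
  qed (auto simp: phi_def mat_eval_def)
  show ?thesis using b r p by blast
qed

lemma carrier_bnd:
  assumes "a \<in> pa_carrier n"
  shows "bnd a (SOME N. bnd a N) \<and> rws n a"
proof -
  have fin: "finite {p. a p \<noteq> 0}" and r: "\<And>i k. a (i,k) \<noteq> 0 \<Longrightarrow> i < n"
    using assms unfolding pa_carrier_def by blast+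
  have "finite (snd ` {p. a p \<noteq> 0})" using fin by (rule finite_imageI)
  then obtain N where N0: "\<forall>k\<in>snd ` {p. a p \<noteq> 0}. k < N"
    unfolding finite_nat_set_iff_bounded by (elim exE)
  have N: "k < N" if "k \<in> snd ` {p. a p \<noteq> 0}" for k using N0 that by (rule bspec)
  have "bnd a N" unfolding bnd_def
  proof (intro allI impI)
    fix i k assume Nk: "N \<le> k"
    show "a (i,k) = 0"
    proof (rule ccontr)
      assume "a (i,k) \<noteq> 0"
      then have "k \<in> snd ` {p. a p \<noteq> 0}" by (intro image_eqI[of _ snd "(i,k)"]) simp_all
      then have "k < N" by (rule N)
      with Nk show False by simp
    qed
  qed
  then have "bnd a (SOME N. bnd a N)" by (rule someI)
  moreover have "rws n a" unfolding rws_def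
  proof (intro allI impI)
    fix i k assume ni: "n \<le> i"
    show "a (i,k) = 0"
    proof (rule ccontr)
      assume "a (i,k) \<noteq> 0"
      then have "i < n" by (rule r)
      with ni show False by simp
    qed
  qed
  ultimately show ?thesis by blast
qed

definition lift :: "nat \<Rightarrow> 'a::field mat \<Rightarrow> (nat \<times> nat \<Rightarrow> 'a)" where
  "lift n M = (\<lambda>(p,k). if p < n \<and> k < n then M $$ (p, (p+k) mod n) else 0)"

lemma lift_carrier: "lift n M \<in> pa_carrier n"
proof -
  have "{p. lift n M p \<noteq> 0} \<subseteq> {..<n} \<times> {..<n}"
    by (auto simp: lift_def split: if_splits)
  then have "finite {p. lift n M p \<noteq> 0}" by (rule finite_subset) simp
  then show ?thesis unfolding pa_carrier_def by (auto simp: lift_def split: if_splits)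
qed

lemma modlem:
  fixes i j k n :: nat
  assumes "i < n" "k < n" "j < n"
  shows "((i+k) mod n = j) = (k = (j+n-i) mod n)"
proof -
  have a: "(i+k) mod n = (if i + k < n then i + k else i + k - n)"
    using assms by (simp add: mod_if)
  have b: "(j+n-i) mod n = (if j + n - i < n then j+n-i else j - i)"
    using assms by (simp add: mod_if)
  show ?thesis unfolding a b using assms by (cases "i + k < n"; cases "j + n - i < n") auto
qed

lemma phi_lift:
  assumes n: "0 < n" and M: "M \<in> carrier_mat n n"
  shows "phi n 1 (lift n M) = M"
proof (rule eq_matI)
  fix i j assume "i < dim_row M" "j < dim_col M"
  then have i: "i < n" and j: "j < n" using M by auto
  have bl: "bnd (lift n M) n" unfolding bnd_def lift_def by auto
  have "phi n 1 (lift n M) $$ (i,j) = phe n 1 (lift n M) n i j"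
    by (rule phi_entry[OF bl i j])
  also have "\<dots> = (\<Sum>k<n. if k = (j+n-i) mod n then M $$ (i,j) else 0)"
    unfolding phe_def
  proof (intro sum.cong refl)
    fix k assume "k \<in> {..<n}"
    then have k: "k < n" by simp
    show "(if (i + k) mod n = j then lift n M (i, k) * 1 ^ k else 0) =
      (if k = (j + n - i) mod n then M $$ (i, j) else 0)"
      using modlem[OF i k j] i k by (auto simp: lift_def)
  qed
  also have "\<dots> = M $$ (i,j)" using n by (simp add: sum.delta)
  finally show "phi n 1 (lift n M) $$ (i, j) = M $$ (i, j)" .
qed (use M in \<open>auto simp: phi_def\<close>)

lemma poly_vanish:
  fixes c :: "nat \<Rightarrow> 'a::field_char_0"
  assumes "\<And>x. (\<Sum>k<N. c k * x^k) = 0" "k < N"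
  shows "c k = 0"
proof -
  define p where "p = (\<Sum>k<N. monom (c k) k)"
  have "\<forall>x. poly p x = 0" using assms(1) by (simp add: p_def poly_sum poly_monom)
  then have "p = 0" using poly_all_0_iff_0 by blast
  then have "coeff p k = 0" by simp
  moreover have "coeff p k = c k" using assms(2)
    by (simp add: p_def coeff_sum coeff_monom)
  ultimately show ?thesis by simp
qed

theorem corollary3:
  fixes n :: nat
  assumes "n \<ge> 2"
  shows "(Id_pa n :: 'a::field_char_0 ncpoly set) = Id_mat n"
proof
  have n: "0 < n" using assms by simp
  show "(Id_pa n :: 'a ncpoly set) \<subseteq> Id_mat n"
  proof
    fix f :: "'a ncpoly" assume fI: "f \<in> Id_pa n"
    then have f: "f \<in> ncpolys" and van: "\<And>s. (\<forall>i. s i \<in> pa_carrier n) \<Longrightarrow> pa_eval n f s = (\<lambda>_. 0)"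
      by (auto simp: Id_pa_def)
    have "mat_eval n f S = 0\<^sub>m n n" if S: "\<forall>i. S i \<in> carrier_mat n n" for S
    proof -
      define s where "s i = lift n (S i)" for i
      define Bs where "Bs i = (SOME N. bnd (s i) N)" for i
      have sc: "s i \<in> pa_carrier n" for i unfolding s_def by (rule lift_carrier)
      have B: "bnd (s i) (Bs i)" and R: "rws n (s i)" for i
        using carrier_bnd[OF sc[of i]] unfolding Bs_def by auto
      have "S = (\<lambda>i. phi n 1 (s i))" using S unfolding s_def by (intro ext) (simp add: phi_lift[OF n])
      then have "mat_eval n f S = phi n 1 (pa_eval n f s)"
        using pa_eval_props[where s=s and Bs=Bs, OF n B R f] by simp
      also have "\<dots> = phi n 1 (\<lambda>_. 0)" using van sc by simp
      also have "\<dots> = 0\<^sub>m n n" by (auto simp: phi_def)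
      finally show ?thesis .
    qed
    then show "f \<in> Id_mat n" using f by (auto simp: Id_mat_def)
  qed
  show "Id_mat n \<subseteq> (Id_pa n :: 'a ncpoly set)"
  proof
    fix f :: "'a ncpoly" assume fI: "f \<in> Id_mat n"
    then have f: "f \<in> ncpolys" and van: "\<And>S. (\<forall>i. S i \<in> carrier_mat n n) \<Longrightarrow> mat_eval n f S = 0\<^sub>m n n"
      by (auto simp: Id_mat_def)
    have "pa_eval n f s = (\<lambda>_. 0)" if sc: "\<forall>i. s i \<in> pa_carrier n" for s
    proof
      fix p :: "nat \<times> nat"
      obtain i k where p: "p = (i,k)" by fastforce
      define Bs where "Bs i = (SOME N. bnd (s i) N)" for i
      have B: "bnd (s i) (Bs i)" and R: "rws n (s i)" for i
        using carrier_bnd[of "s i" n] sc unfolding Bs_def by auto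
      define N where "N = (\<Sum>w\<in>{w. f w \<noteq> 0}. 1 + sum_list (map Bs w))"
      define e where "e = pa_eval n f s"
      have props: "bnd e N" "rws n e" "\<And>x. phi n x e = mat_eval n f (\<lambda>i. phi n x (s i))"
        using pa_eval_props[where s=s and Bs=Bs, OF n B R f] unfolding N_def e_def by auto
      have ph0: "phi n x e = 0\<^sub>m n n" for x
        unfolding props(3) by (rule van) (simp add: phi_carrier)
      have "e (i,k) = 0"
      proof (cases "n \<le> i")
        case True then show ?thesis using props(2) by (simp add: rws_def)
      next
        case False
        then have i: "i < n" by simp
        show ?thesis
        proof (cases "N \<le> k")
          case True then show ?thesis using props(1) by (simp add: bnd_def)
        next
          case False
          then have k: "k < N" by simp
          define j where "j = (i+k) mod n"
          have j: "j < n" unfolding j_def using n by simp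
          define c where "c k' = (if (i+k') mod n = j then e (i,k') else 0)" for k'
          have "(\<Sum>k'<N. c k' * x^k') = 0" for x
          proof -
            have "(\<Sum>k'<N. c k' * x^k') = phe n x e N i j"
              unfolding phe_def c_def by (intro sum.cong refl) auto
            also have "\<dots> = phi n x e $$ (i,j)" using phi_entry[OF props(1) i j] by simp
            also have "\<dots> = 0" using ph0 i j by simp
            finally show ?thesis .
          qed
          then have "c k = 0" using poly_vanish k by blast
          then show ?thesis unfolding c_def j_def by simp
        qed
      qed
      then show "pa_eval n f s p = 0" unfolding p e_def .
    qed
    then show "f \<in> Id_pa n" using f by (auto simp: Id_pa_def)
  qed
qed

end
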